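(* Let $\beta_{ij}$ ($i\neq j$, $i,j=1,\dots,N$) be smooth functions of $\boldsymbol u=(u_1,\dots,u_N)$ satisfying the Lamé equations $$\frac{\partial\beta_{ij}}{\partial u_k}=\beta_{ik}\beta_{kj}\ (i,j,k \text{ distinct}),\qquad \frac{\partial\beta_{ij}}{\partial u_i}+\frac{\partial\beta_{ji}}{\partial u_j}+\sum_{k\neq i,j}\beta_{ki}\beta_{kj}=0\ (i\neq j).$$ Let $\boldsymbol\xi_i$ ($\mathbb R^M$-valued) and $\boldsymbol\zeta_i$ ($\mathbb R^L$-valued), $i=1,\dots,N$, satisfy $\frac{\partial\boldsymbol\xi_j}{\partial u_i}=\beta_{ji}\boldsymbol\xi_i$ and $\frac{\partial\boldsymbol\zeta_j}{\partial u_i}=\beta_{ji}\boldsymbol\zeta_i$ for $i\neq j$, and set $$\boldsymbol\xi^*_i=\Big(\frac{\partial\boldsymbol\xi_i}{\partial u_i}+\sum_{k\neq i}\boldsymbol\xi_k\beta_{ki}\Big)^{T},\qquad \boldsymbol\zeta^*_i=\Big(\frac{\partial\boldsymbol\zeta_i}{\partial u_i}+\sum_{k\neq i}\boldsymbol\zeta_k\beta_{ki}\Big)^{T}.$$ Let $\Omega(\boldsymbol\xi,\boldsymbol\zeta^* )$ be an $M\times L$ matrix function and $\Omega(\boldsymbol\zeta,\boldsymbol\xi^* )$ an $L\times M$ matrix function with $\frac{\partial\Omega(\boldsymbol\xi,\boldsymbol\zeta^* )}{\partial u_i}=\boldsymbol\xi_i\boldsymbol\zeta^*_i$ and $\frac{\partial\Omega(\boldsymbol\zeta,\boldsymbol\xi^*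 )}{\partial u_i}=\boldsymbol\zeta_i\boldsymbol\xi^*_i$ for all $i$. Then for every $i=1,\dots,N$, $$\frac{\partial}{\partial u_i}\Big(\Omega(\boldsymbol\xi,\boldsymbol\zeta^* )+\Omega(\boldsymbol\zeta,\boldsymbol\xi^* )^{T}-\sum_{k=1}^N\boldsymbol\xi_k\boldsymbol\zeta_k^{T}\Big)=0.$$
   Context: Vectors are columns, starred quantities are row vectors, ${}^T$ is transpose, and products such as $\boldsymbol\xi_i\boldsymbol\zeta^*_i$ denote the outer (column times row) product. All functions are smooth on an open domain of $\mathbb R^N$. *)

theory Defs
  imports "HOL-Analysis.Analysis"
begin

definition pd :: "'n::finite \<Rightarrow> (real^'n \<Rightarrow> 'a::real_normed_vector) \<Rightarrow> real^'n \<Rightarrow> 'a" where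
  "pd i f u = vector_derivative (\<lambda>t. f (u + t *\<^sub>R axis i 1)) (at 0)"

fun iter_pd :: "'n::finite list \<Rightarrow> (real^'n \<Rightarrow> 'a::real_normed_vector) \<Rightarrow> real^'n \<Rightarrow> 'a" where
  "iter_pd [] f = f"
| "iter_pd (i # is) f = pd i (iter_pd is f)"

definition smooth_on :: "(real^'n::finite) set \<Rightarrow> (real^'n \<Rightarrow> 'a::real_normed_vector) \<Rightarrow> bool" where
  "smooth_on U f \<longleftrightarrow> (\<forall>is. iter_pd is f differentiable_on U)"

definition outer :: "real^'m \<Rightarrow> real^'l \<Rightarrow> real^'l^'m" where
  "outer x y = (\<chi> a b. x $ a * y $ b)"

text \<open>The starred row vectors: (d xi_i/d u_i + sum_{k<>i} xi_k beta_ki)^T, stored as a vector.\<close>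
definition star :: "('n::finite \<Rightarrow> 'n \<Rightarrow> real^'n \<Rightarrow> real) \<Rightarrow> ('n \<Rightarrow> real^'n \<Rightarrow> real^'m) \<Rightarrow> 'n \<Rightarrow> real^'n \<Rightarrow> real^'m" where
  "star \<beta> \<xi> i u = pd i (\<xi> i) u + (\<Sum>k\<in>UNIV - {i}. \<beta> k i u *\<^sub>R \<xi> k u)"

end

theory Submission
  imports Defs
begin


lemma bl_transpose: "bounded_linear (transpose :: real^'b::finite^'a::finite \<Rightarrow> real^'a^'b)"
  apply (rule linear_conv_bounded_linear[THEN iffD1])
  apply (rule linearI)
  by (simp_all add: vec_eq_iff transpose_def)

lemma bb_outer: "bounded_bilinear (outer :: real^'a::finite \<Rightarrow> real^'b::finite \<Rightarrow> real^'b^'a)"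
  apply (rule bilinear_conv_bounded_bilinear[THEN iffD1])
  unfolding bilinear_def
  apply (intro conjI allI linearI)
  by (simp_all add: vec_eq_iff outer_def algebra_simps)

lemma hvd_pd:
  fixes F :: "real^'n::finite \<Rightarrow> 'a::real_normed_vector"
  assumes "F differentiable (at u)"
  shows "((\<lambda>t. F (u + t *\<^sub>R axis i 1)) has_vector_derivative pd i F u) (at 0)"
proof -
  have g: "(\<lambda>t::real. u + t *\<^sub>R axis i 1) differentiable (at 0)"
    by (intro differentiable_add differentiable_scaleR differentiable_const differentiable_ident) 
  have "(F \<circ> (\<lambda>t::real. u + t *\<^sub>R axis i 1)) differentiable (at 0)"
    by (rule differentiable_chain_at[OF g]) (simp add: assms)
  then show ?thesis
    unfolding pd_def o_def by (simp add: vector_derivative_works)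
qed

lemma smooth_diff_at:
  assumes "smooth_on U f" "open U" "u \<in> U"
  shows "f differentiable (at u)"
proof -
  have "iter_pd [] f differentiable_on U" using assms(1) unfolding smooth_on_def by blast
  then show ?thesis using assms(2,3)
    by (simp add: differentiable_on_eq_differentiable_at)
qed

theorem lemma2:
  fixes U :: "(real^'n::finite) set"
    and \<beta> :: "'n \<Rightarrow> 'n \<Rightarrow> real^'n \<Rightarrow> real"
    and \<xi> :: "'n \<Rightarrow> real^'n \<Rightarrow> real^'m::finite"
    and \<zeta> :: "'n \<Rightarrow> real^'n \<Rightarrow> real^'l::finite"
    and \<Omega>1 :: "real^'n \<Rightarrow> real^'l^'m"
    and \<Omega>2 :: "real^'n \<Rightarrow> real^'m^'l"
  assumes U: "open U"
    and sm_beta: "\<And>i j. i \<noteq> j \<Longrightarrow> smooth_on U (\<beta> i j)"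
    and sm_xi: "\<And>i. smooth_on U (\<xi> i)"
    and sm_zeta: "\<And>i. smooth_on U (\<zeta> i)"
    and sm_O1: "smooth_on U \<Omega>1"
    and sm_O2: "smooth_on U \<Omega>2"
    and lame1: "\<And>i j k u. u \<in> U \<Longrightarrow> i \<noteq> j \<Longrightarrow> j \<noteq> k \<Longrightarrow> i \<noteq> k \<Longrightarrow>
                  pd k (\<beta> i j) u = \<beta> i k u * \<beta> k j u"
    and lame2: "\<And>i j u. u \<in> U \<Longrightarrow> i \<noteq> j \<Longrightarrow>
                  pd i (\<beta> i j) u + pd j (\<beta> j i) u + (\<Sum>k\<in>UNIV - {i, j}. \<beta> k i u * \<beta> k j u) = 0"
    and xi_eq: "\<And>i j u. u \<in> U \<Longrightarrow> i \<noteq> j \<Longrightarrow> pd i (\<xi> j) u = \<beta> j i u *\<^sub>R \<xi> i u"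
    and zeta_eq: "\<And>i j u. u \<in> U \<Longrightarrow> i \<noteq> j \<Longrightarrow> pd i (\<zeta> j) u = \<beta> j i u *\<^sub>R \<zeta> i u"
    and O1_eq: "\<And>i u. u \<in> U \<Longrightarrow> pd i \<Omega>1 u = outer (\<xi> i u) (star \<beta> \<zeta> i u)"
    and O2_eq: "\<And>i u. u \<in> U \<Longrightarrow> pd i \<Omega>2 u = outer (\<zeta> i u) (star \<beta> \<xi> i u)"
  shows "\<forall>i. \<forall>u\<in>U. pd i (\<lambda>v. \<Omega>1 v + transpose (\<Omega>2 v) - (\<Sum>k\<in>UNIV. outer (\<xi> k v) (\<zeta> k v))) u = 0"
proof (intro allI ballI)
  fix i u assume uU: "u \<in> U"
  let ?g = "\<lambda>t::real. u + t *\<^sub>R axis i 1"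
  have dx: "\<And>k. ((\<lambda>t. \<xi> k (?g t)) has_vector_derivative pd i (\<xi> k) u) (at 0)"
    by (rule hvd_pd, rule smooth_diff_at[OF sm_xi U uU])
  have dz: "\<And>k. ((\<lambda>t. \<zeta> k (?g t)) has_vector_derivative pd i (\<zeta> k) u) (at 0)"
    by (rule hvd_pd, rule smooth_diff_at[OF sm_zeta U uU])
  have d1: "((\<lambda>t. \<Omega>1 (?g t)) has_vector_derivative pd i \<Omega>1 u) (at 0)"
    by (rule hvd_pd, rule smooth_diff_at[OF sm_O1 U uU])
  have d2: "((\<lambda>t. \<Omega>2 (?g t)) has_vector_derivative pd i \<Omega>2 u) (at 0)"
    by (rule hvd_pd, rule smooth_diff_at[OF sm_O2 U uU])
  have d2t: "((\<lambda>t. transpose (\<Omega>2 (?g t))) has_vector_derivative transpose (pd i \<Omega>2 u)) (at 0)"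
    using bounded_linear.has_vector_derivative[OF bl_transpose d2] .
  have dk: "\<And>k. ((\<lambda>t. outer (\<xi> k (?g t)) (\<zeta> k (?g t))) has_vector_derivative
      outer (\<xi> k (?g 0)) (pd i (\<zeta> k) u) + outer (pd i (\<xi> k) u) (\<zeta> k (?g 0))) (at 0)"
    using bounded_bilinear.has_vector_derivative[OF bb_outer dx dz] by simp
  have ds: "((\<lambda>t. \<Sum>k\<in>UNIV. outer (\<xi> k (?g t)) (\<zeta> k (?g t))) has_vector_derivative
      (\<Sum>k\<in>UNIV. outer (\<xi> k u) (pd i (\<zeta> k) u) + outer (pd i (\<xi> k) u) (\<zeta> k u))) (at 0)"
    using has_vector_derivative_sum[OF dk] by simp
  have D: "((\<lambda>t. \<Omega>1 (?g t) + transpose (\<Omega>2 (?g t)) - (\<Sum>k\<in>UNIV. outer (\<xi> k (?g t)) (\<zeta> k (?g t))))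
     has_vector_derivative pd i \<Omega>1 u + transpose (pd i \<Omega>2 u) -
      (\<Sum>k\<in>UNIV. outer (\<xi> k u) (pd i (\<zeta> k) u) + outer (pd i (\<xi> k) u) (\<zeta> k u))) (at 0)"
    by (intro has_vector_derivative_diff has_vector_derivative_add d1 d2t ds)
  have Z: "pd i \<Omega>1 u + transpose (pd i \<Omega>2 u) -
      (\<Sum>k\<in>UNIV. outer (\<xi> k u) (pd i (\<zeta> k) u) + outer (pd i (\<xi> k) u) (\<zeta> k u)) = 0"
  proof -
    have rm: "\<And>h::'n \<Rightarrow> real. (\<Sum>k\<in>UNIV. h k) = h i + (\<Sum>k\<in>UNIV-{i}. h k)"
      by (simp add: sum.remove)
    have C: "(pd i \<Omega>1 u + transpose (pd i \<Omega>2 u) -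
      (\<Sum>k\<in>UNIV. outer (\<xi> k u) (pd i (\<zeta> k) u) + outer (pd i (\<xi> k) u) (\<zeta> k u))) $ a $ b = 0" for a b
    proof -
      have e1: "(\<Sum>k\<in>UNIV - {i}. \<xi> k u $ a * pd i (\<zeta> k) u $ b + pd i (\<xi> k) u $ a * \<zeta> k u $ b)
          = \<xi> i u $ a * (\<Sum>k\<in>UNIV-{i}. \<beta> k i u * \<zeta> k u $ b)
            + \<zeta> i u $ b * (\<Sum>k\<in>UNIV-{i}. \<beta> k i u * \<xi> k u $ a)"
        unfolding sum_distrib_left sum.distrib[symmetric]
        by (rule sum.cong) (auto simp: xi_eq[OF uU] zeta_eq[OF uU])
      show ?thesis
        apply (simp add: O1_eq[OF uU] O2_eq[OF uU] transpose_def outer_def star_def sum_component)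
        apply (subst rm)
        apply (simp only: e1)
        apply (simp add: algebra_simps)
        done
    qed
    show ?thesis using C by (simp add: vec_eq_iff)
  qed
  show "pd i (\<lambda>v. \<Omega>1 v + transpose (\<Omega>2 v) - (\<Sum>k\<in>UNIV. outer (\<xi> k v) (\<zeta> k v))) u = 0"
    unfolding pd_def using vector_derivative_at[OF D] Z by simp
qed

end
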